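(* Let $F$ be an order continuous Banach lattice, $E$ a Banach space and $T\in\mathcal{L}(F,E)$. The following are equivalent: (i) $T$ is DNS, i.e. there is no disjoint sequence $(f_n)\subset\mathrm{S}_F$ with $\|Tf_n\|\to0$; (ii) $T$ is strictly DNS, i.e. there is $\delta>0$ such that no disjoint sequence $(f_n)\subset\mathrm{S}_F$ satisfies $\|Tf_n\|\le\delta$ for all $n$; (iii) there is no sequence (equivalently, no net) in $\mathrm{S}_F$ which is un-null and satisfies $\|Tf_i\|\to0$; (iv) there are $\varepsilon,\delta>0$ and $h\in F_+$ such that $\|Tf\|\ge\delta$ whenever $f\in\mathrm{S}_F$ and $\||f|\wedge h\|<\varepsilon$. Consequently, the set of DNS operators is open in $\mathcal{L}(F,E)$.
   Context: $\mathrm{S}_F$ is the unit sphere of $F$; $x,y$ disjoint means $|x|\wedge|y|=0$. The un-topology on $F$ is the linear topology with zero neighborhood base $\{f\in F:\||f|\wedge h\|<\varepsilon\}$, $h\in F_+$, $\varepsilon>0$. *)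

theory Defs
  imports "HOL-Analysis.Analysis"
begin

definition lmod :: "'a::{lattice, uminus} \<Rightarrow> 'a" where
  "lmod x = sup x (- x)"

class banach_lattice = banach + ordered_real_vector + lattice +
  assumes norm_lattice_mono: "sup x (- x) \<le> sup y (- y) \<Longrightarrow> norm x \<le> norm y"

text \<open>Order continuity: every downward directed net of positive elements with
  infimum 0 (the net indexed by itself) converges to 0 in norm.\<close>
definition order_continuous :: "'a::banach_lattice itself \<Rightarrow> bool" where
  "order_continuous _ \<longleftrightarrow>
     (\<forall>A :: 'a set. A \<noteq> {}
        \<and> (\<forall>x\<in>A. \<forall>y\<in>A. \<exists>z\<in>A. z \<le> x \<and> z \<le> y)
        \<and> (\<forall>x\<in>A. 0 \<le> x)
        \<and> (\<forall>z. (\<forall>x\<in>A. z \<le> x) \<longrightarrow> z \<le> 0)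
        \<longrightarrow> (\<forall>\<epsilon>>0. \<exists>x\<in>A. \<forall>y\<in>A. y \<le> x \<longrightarrow> norm y < \<epsilon>))"

definition disjoint_elems :: "'a::banach_lattice \<Rightarrow> 'a \<Rightarrow> bool" where
  "disjoint_elems x y \<longleftrightarrow> inf (lmod x) (lmod y) = 0"

definition disjoint_seq :: "(nat \<Rightarrow> 'a::banach_lattice) \<Rightarrow> bool" where
  "disjoint_seq f \<longleftrightarrow> (\<forall>n m. n \<noteq> m \<longrightarrow> disjoint_elems (f n) (f m))"

definition un_null :: "('i \<Rightarrow> 'a::banach_lattice) \<Rightarrow> 'i filter \<Rightarrow> bool" where
  "un_null x G \<longleftrightarrow>
     (\<forall>h. 0 \<le> h \<longrightarrow> (\<forall>\<epsilon>>0. eventually (\<lambda>i. norm (inf (lmod (x i)) h) < \<epsilon>) G))"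

definition DNS :: "('a::banach_lattice \<Rightarrow> 'b::real_normed_vector) \<Rightarrow> bool" where
  "DNS T \<longleftrightarrow> \<not> (\<exists>f :: nat \<Rightarrow> 'a. (\<forall>n. norm (f n) = 1) \<and> disjoint_seq f
                    \<and> (\<lambda>n. norm (T (f n))) \<longlonglongrightarrow> 0)"

definition strictly_DNS :: "('a::banach_lattice \<Rightarrow> 'b::real_normed_vector) \<Rightarrow> bool" where
  "strictly_DNS T \<longleftrightarrow> (\<exists>\<delta>>0. \<not> (\<exists>f :: nat \<Rightarrow> 'a. (\<forall>n. norm (f n) = 1) \<and> disjoint_seq f
                    \<and> (\<forall>n. norm (T (f n)) \<le> \<delta>)))"

end

theory Submission imports Defs "HOL-Library.Lattice_Algebras" begin
subclass (in banach_lattice) lattice_ab_group_add ..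

lemma lmod_ge1: "(x::'a::lattice_ab_group_add) \<le> lmod x" by (simp add: lmod_def)
lemma lmod_ge2: "- (x::'a::lattice_ab_group_add) \<le> lmod x" by (simp add: lmod_def)
lemma lmod_le: "(x::'a::lattice_ab_group_add) \<le> d \<Longrightarrow> - x \<le> d \<Longrightarrow> lmod x \<le> d"
  by (simp add: lmod_def)
lemma lmod_nonneg: "0 \<le> lmod (x::'a::lattice_ab_group_add)"
proof -
  have "x + - x \<le> lmod x + lmod x" by (intro add_mono lmod_ge1 lmod_ge2)
  then show ?thesis by simp
qed
lemma lmod_pos: "0 \<le> (x::'a::lattice_ab_group_add) \<Longrightarrow> lmod x = x"
  unfolding lmod_def by (metis le_minus_iff order_trans sup.absorb1 neg_le_0_iff_le)
lemma lmod_minus: "lmod (- (x::'a::lattice_ab_group_add)) = lmod x"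
  unfolding lmod_def by (simp add: sup_commute)

lemma sup_diff: "sup a b - (c::'a::lattice_ab_group_add) = sup (a - c) (b - c)"
  by (simp only: diff_conv_add_uminus add_sup_distrib_right)

lemma pn_disj: "inf (sup (x::'a::lattice_ab_group_add) 0) (sup (-x) 0) = 0"
proof -
  have b: "sup (-x) 0 = sup x 0 + (- x)" by (metis sup_diff diff_conv_add_uminus diff_self sup_commute diff_0)
  have "inf (sup x 0) (sup (-x) 0) = sup x 0 + inf 0 (-x)"
    by (simp only: b add_inf_distrib_left) simp
  moreover have "inf 0 (-x) = - sup x 0" by (simp add: neg_sup_eq_inf inf_commute)
  ultimately show ?thesis by (metis add.right_inverse)
qed

definition clip :: "'a::lattice_ab_group_add \<Rightarrow> 'a \<Rightarrow> 'a" where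
  "clip f c = sup (inf f c) (- c)"

lemma clip_bound: assumes "0 \<le> (c::'a::lattice_ab_group_add)"
  shows "lmod (clip f c) \<le> inf (lmod f) c"
proof (rule lmod_le)
  have "inf f c \<le> lmod f" using lmod_ge1[of f] inf.coboundedI1 by blast
  moreover have "- c \<le> lmod f" using assms lmod_nonneg[of f] by (meson neg_le_0_iff_le order_trans)
  moreover have "- c \<le> c" using assms by (meson neg_le_0_iff_le order_trans)
  ultimately show "clip f c \<le> inf (lmod f) c" unfolding clip_def by simp
  have "- clip f c = inf (sup (-f) (-c)) c" unfolding clip_def
    by (simp add: neg_sup_eq_inf neg_inf_eq_sup inf_commute sup_commute)
  moreover have "sup (-f) (-c) \<le> lmod f" using lmod_ge2[of f] \<open>- c \<le> lmod f\<close> by simp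
  ultimately show "- clip f c \<le> inf (lmod f) c" by (simp add: inf.coboundedI1)
qed

lemma clip_rest: assumes "0 \<le> (c::'a::lattice_ab_group_add)"
  shows "lmod (f - clip f c) \<le> sup (lmod f - c) 0"
proof (rule lmod_le)
  have "f - clip f c \<le> f - inf f c" unfolding clip_def by (simp add: diff_mono)
  also have "f - inf f c = sup (f - c) 0" by (simp add: diff_inf_eq_sup add_sup_distrib_left sup_commute)
  also have "\<dots> \<le> sup (lmod f - c) 0" using lmod_ge1[of f]
    by (meson diff_right_mono sup.mono order_refl)
  finally show "f - clip f c \<le> sup (lmod f - c) 0" .
  have "- (f - clip f c) = sup (inf f c - f) (- c - f)" unfolding clip_def
    by (simp add: sup_diff)
  also have "\<dots> \<le> sup 0 (-f - c)"
    apply (rule sup.mono)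
    apply (simp add: diff_le_eq inf.coboundedI1)
    by simp
  also have "\<dots> \<le> sup (lmod f - c) 0" using lmod_ge2[of f]
    by (metis diff_right_mono sup.mono order_refl sup_commute)
  finally show "- (f - clip f c) \<le> sup (lmod f - c) 0" .
qed

lemma disj_core: assumes "0 \<le> x" "0 \<le> y" "x \<le> sup (a - inf a b) 0" "y \<le> sup (b - a) 0"
  shows "inf x (y::'a::lattice_ab_group_add) = 0"
proof -
  have "a - inf a b = sup 0 (a - b)" by (simp add: diff_inf_eq_sup add_sup_distrib_left)
  then have "sup (a - inf a b) 0 = sup (a - b) 0" by (simp add: sup_commute)
  then have "inf x y \<le> inf (sup (a - b) 0) (sup (-(a-b)) 0)" using assms
    by (metis inf_mono minus_diff_eq)
  then have "inf x y \<le> 0" using pn_disj by metis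
  moreover have "0 \<le> inf x y" using assms by simp
  ultimately show ?thesis by simp
qed


lemma norm_pos_mono: "0 \<le> (x::'a::banach_lattice) \<Longrightarrow> x \<le> y \<Longrightarrow> norm x \<le> norm y"
proof -
  assume a: "0 \<le> x" "x \<le> y"
  have "sup x (-x) = x" using lmod_pos[OF a(1)] unfolding lmod_def .
  moreover have "sup y (-y) = y" using lmod_pos[OF order.trans[OF a]] unfolding lmod_def .
  ultimately show ?thesis using a by (intro norm_lattice_mono) simp
qed

lemma norm_lmod_le: "lmod (x::'a::banach_lattice) \<le> d \<Longrightarrow> norm x \<le> norm d"
proof -
  assume a: "lmod x \<le> d"
  have "sup d (-d) = d" using lmod_pos[OF order.trans[OF lmod_nonneg a]] unfolding lmod_def .
  then show ?thesis using a unfolding lmod_def by (intro norm_lattice_mono) simp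
qed

lemma norm_lmod: "norm (lmod (x::'a::banach_lattice)) = norm x"
proof (rule antisym)
  show "norm x \<le> norm (lmod x)" by (rule norm_lmod_le) simp
  have "sup (lmod x) (- lmod x) = lmod x" using lmod_pos[OF lmod_nonneg[of x]] unfolding lmod_def .
  then show "norm (lmod x) \<le> norm x" by (intro norm_lattice_mono) (simp add: lmod_def)
qed

lemma inf_add_le: assumes "0 \<le> a" "0 \<le> b" "0 \<le> (c::'a::lattice_ab_group_add)"
  shows "inf a (b + c) \<le> inf a b + inf a c"
proof -
  have "inf a b + inf a c = inf (inf (a + a) (a + c)) (inf (b + a) (b + c))"
    by (simp add: add_inf_distrib_left add_inf_distrib_right inf_aci)
  moreover have "inf a (b + c) \<le> inf (inf (a + a) (a + c)) (inf (b + a) (b + c))"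
  proof (intro le_infI)
    show "inf a (b + c) \<le> a + a" using assms by (meson add_increasing2 inf.coboundedI1 order_refl)
    show "inf a (b + c) \<le> a + c" using assms by (meson add_increasing2 inf.coboundedI1 order_refl)
    show "inf a (b + c) \<le> b + a" using assms by (meson add_increasing inf.coboundedI1 order_refl)
    show "inf a (b + c) \<le> b + c" by simp
  qed
  ultimately show ?thesis by simp
qed

lemma disj_add: assumes "0 \<le> x" "0 \<le> y" "inf x (y::'a::lattice_ab_group_add) = 0"
  shows "x + y = sup x y"
  using add_eq_inf_sup[of x y] assms by simp

lemma inf_lip: "lmod (inf x a - inf y a) \<le> lmod ((x::'a::lattice_ab_group_add) - y)"
proof -
  have g: "\<And>x y. inf x a - inf y a \<le> lmod (x - y)"
  proof -
    fix x y :: 'a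
    let ?d = "lmod (x - y)"
    have "x \<le> y + ?d" using lmod_ge1[of "x - y"] by (simp add: algebra_simps)
    then have "inf x a \<le> inf (y + ?d) (a + ?d)"
      using lmod_nonneg[of "x-y"] by (metis add_increasing2 inf_mono order_refl)
    also have "\<dots> = inf y a + ?d" by (simp add: add_inf_distrib_right)
    finally show "inf x a - inf y a \<le> ?d" by (metis diff_le_eq add.commute)
  qed
  show ?thesis
    apply (rule lmod_le)
    apply (rule g)
    using g[of y x] by (metis lmod_minus minus_diff_eq)
qed

lemma closed_ge: "closed {x::'a::banach_lattice. a \<le> x}"
proof -
  have "{x::'a. a \<le> x} = {x. inf x a = a}" by (simp add: inf.absorb_iff2)
  moreover have "continuous_on UNIV (\<lambda>x::'a. inf x a)"
  proof (rule lipschitz_on_continuous_on)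
    show "1-lipschitz_on UNIV (\<lambda>x::'a. inf x a)"
    proof (rule lipschitz_onI)
      fix x y :: 'a
      have "norm (inf x a - inf y a) \<le> norm (lmod (x - y))"
        by (rule norm_lmod_le[OF inf_lip])
      then show "dist (inf x a) (inf y a) \<le> 1 * dist x y" by (simp add: dist_norm norm_lmod)
    qed simp
  qed
  ultimately show ?thesis by (simp add: closed_Collect_eq)
qed

lemma scaleR_sup: assumes "0 < r" shows "r *\<^sub>R sup a b = sup (r *\<^sub>R a) (r *\<^sub>R (b::'a::banach_lattice))"
proof (rule antisym)
  show "sup (r *\<^sub>R a) (r *\<^sub>R b) \<le> r *\<^sub>R sup a b" using assms
    by (simp add: scaleR_left_mono)
  have "inverse r *\<^sub>R sup (r *\<^sub>R a) (r *\<^sub>R b) \<ge> a" "inverse r *\<^sub>R sup (r *\<^sub>R a) (r *\<^sub>R b) \<ge> b"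
    using assms scaleR_left_mono[of "r *\<^sub>R a" "sup (r *\<^sub>R a) (r *\<^sub>R b)" "inverse r"]
      scaleR_left_mono[of "r *\<^sub>R b" "sup (r *\<^sub>R a) (r *\<^sub>R b)" "inverse r"] by auto
  then have "sup a b \<le> inverse r *\<^sub>R sup (r *\<^sub>R a) (r *\<^sub>R b)" by simp
  from scaleR_left_mono[OF this, of r] assms show "r *\<^sub>R sup a b \<le> sup (r *\<^sub>R a) (r *\<^sub>R b)" by simp
qed

lemma scaleR_inf: assumes "0 < r" shows "r *\<^sub>R inf a b = inf (r *\<^sub>R a) (r *\<^sub>R (b::'a::banach_lattice))"
proof -
  have "r *\<^sub>R inf a b = - (r *\<^sub>R sup (-a) (-b))"
    by (simp only: inf_eq_neg_sup[of a b] scaleR_minus_right)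
  also have "\<dots> = - sup (- (r *\<^sub>R a)) (- (r *\<^sub>R b))"
    by (simp only: scaleR_sup[OF assms] scaleR_minus_right)
  also have "\<dots> = inf (r *\<^sub>R a) (r *\<^sub>R b)" by (simp only: inf_eq_neg_sup[symmetric])
  finally show ?thesis .
qed

lemma lmod_scaleR: assumes "0 < r" shows "lmod (r *\<^sub>R (x::'a::banach_lattice)) = r *\<^sub>R lmod x"
  unfolding lmod_def using scaleR_sup[OF assms, of x "-x"] by simp


lemma disj_sum_inf:
  fixes u :: "nat \<Rightarrow> 'a::lattice_ab_group_add"
  assumes pos: "\<And>n. 0 \<le> u n" and dis: "\<And>n m. n \<noteq> m \<Longrightarrow> inf (u n) (u m) = 0"
  shows "finite F \<Longrightarrow> n \<notin> F \<Longrightarrow> inf (u n) (sum u F) = 0"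
proof (induction F rule: finite_induct)
  case empty then show ?case using pos[of n] by (simp add: inf.absorb2)
next
  case (insert m F)
  have "inf (u n) (sum u (insert m F)) = inf (u n) (u m + sum u F)" using insert by simp
  also have "\<dots> \<le> inf (u n) (u m) + inf (u n) (sum u F)"
    by (rule inf_add_le) (simp_all add: pos sum_nonneg)
  also have "\<dots> = 0"
  proof -
    have "n \<noteq> m" "n \<notin> F" using insert.prems by auto
    then show ?thesis using insert.IH dis[of n m] insert.hyps by simp
  qed
  finally have "inf (u n) (sum u (insert m F)) \<le> 0" .
  moreover have "0 \<le> inf (u n) (sum u (insert m F))" using pos by (simp add: sum_nonneg le_infI)
  ultimately show ?case by simp
qed

lemma disj_sum_le:
  fixes u :: "nat \<Rightarrow> 'a::lattice_ab_group_add"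
  assumes pos: "\<And>n. 0 \<le> u n" and dis: "\<And>n m. n \<noteq> m \<Longrightarrow> inf (u n) (u m) = 0"
    and le: "\<And>n. u n \<le> h" and "0 \<le> h"
  shows "finite F \<Longrightarrow> sum u F \<le> h"
proof (induction F rule: finite_induct)
  case empty then show ?case using \<open>0 \<le> h\<close> by simp
next
  case (insert m F)
  have "sum u (insert m F) = u m + sum u F" using insert by simp
  also have "\<dots> = sup (u m) (sum u F)"
  proof (rule disj_add)
    show "inf (u m) (sum u F) = 0" by (rule disj_sum_inf[OF pos dis insert.hyps(1) insert.hyps(2)])
  qed (simp_all add: pos sum_nonneg)
  also have "\<dots> \<le> h" using insert.IH le by simp
  finally show ?case .
qed

lemma oc_disj_null:
  fixes u :: "nat \<Rightarrow> 'a::banach_lattice"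
  assumes oc: "order_continuous TYPE('a)"
    and pos: "\<And>n. 0 \<le> u n" and dis: "\<And>n m. n \<noteq> m \<Longrightarrow> inf (u n) (u m) = 0"
    and le: "\<And>n. u n \<le> h"
  shows "(\<lambda>n. norm (u n)) \<longlonglongrightarrow> 0"
proof -
  have h0: "0 \<le> h" using pos[of 0] le[of 0] by simp
  define A where "A = {a::'a. 0 \<le> a \<and> (\<exists>N. \<forall>n\<ge>N. u n \<le> a)}"
  have hA: "h \<in> A" using h0 le unfolding A_def by auto
  have dirA: "\<forall>x\<in>A. \<forall>y\<in>A. \<exists>z\<in>A. z \<le> x \<and> z \<le> y"
  proof (intro ballI)
    fix x y assume "x \<in> A" "y \<in> A"
    then obtain N1 N2 where "\<forall>n\<ge>N1. u n \<le> x" "\<forall>n\<ge>N2. u n \<le> y" "0 \<le> x" "0 \<le> y"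
      unfolding A_def by auto
    then have "inf x y \<in> A" unfolding A_def by (auto intro!: exI[of _ "max N1 N2"])
    then show "\<exists>z\<in>A. z \<le> x \<and> z \<le> y" by (intro bexI[of _ "inf x y"]) auto
  qed
  have posA: "\<forall>x\<in>A. 0 \<le> x" unfolding A_def by auto
  have infA: "\<forall>z. (\<forall>x\<in>A. z \<le> x) \<longrightarrow> z \<le> 0"
  proof (intro allI impI)
    fix z assume lb: "\<forall>x\<in>A. z \<le> x"
    define w where "w = sup z 0"
    have w0: "0 \<le> w" unfolding w_def by simp
    have wlb: "\<And>x. x \<in> A \<Longrightarrow> w \<le> x" using lb posA unfolding w_def by auto
    have key: "\<And>F. finite F \<Longrightarrow> of_nat k *\<^sub>R w + sum u F \<le> h" for k
    proof (induction k)
      case 0 then show ?case using disj_sum_le[OF pos dis le h0] by simp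
    next
      case (Suc k)
      fix F :: "nat set" assume fF: "finite F"
      obtain N where N: "F \<subseteq> {..<N}" using finite_nat_bounded[OF fF] by auto
      let ?a = "h - (of_nat k *\<^sub>R w + sum u F)"
      have "?a \<in> A" unfolding A_def
      proof (intro CollectI conjI exI allI impI)
        show "0 \<le> ?a" using Suc.IH[OF fF] by simp
        fix n assume "N \<le> n"
        then have nF: "n \<notin> F" using N by auto
        have "of_nat k *\<^sub>R w + sum u (insert n F) \<le> h" using Suc.IH fF by simp
        then show "u n \<le> ?a" using nF fF by (simp add: algebra_simps)
      qed
      then have "w \<le> ?a" by (rule wlb)
      then show "of_nat (Suc k) *\<^sub>R w + sum u F \<le> h" by (simp add: algebra_simps)
    qed
    have "w = 0"
    proof (rule ccontr)
      assume "w \<noteq> 0"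
      then have nw: "norm w > 0" by simp
      obtain k :: nat where k: "norm h < real k * norm w"
        using reals_Archimedean3[OF nw] by blast
      have "of_nat k *\<^sub>R w \<le> h" using key[of "{}" k] by simp
      then have "norm (of_nat k *\<^sub>R w) \<le> norm h"
        using w0 by (intro norm_pos_mono) (auto intro: scaleR_nonneg_nonneg)
      then show False using k by simp
    qed
    then show "z \<le> 0" unfolding w_def by (metis sup.cobounded1)
  qed
  have cond: "A \<noteq> {} \<and> (\<forall>x\<in>A. \<forall>y\<in>A. \<exists>z\<in>A. z \<le> x \<and> z \<le> y) \<and> (\<forall>x\<in>A. 0 \<le> x)
        \<and> (\<forall>z. (\<forall>x\<in>A. z \<le> x) \<longrightarrow> z \<le> 0)" using hA dirA posA infA by auto
  show ?thesis
  proof (rule LIMSEQ_I)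
    fix r :: real assume "0 < r"
    have ocA: "\<forall>\<epsilon>>0. \<exists>x\<in>A. \<forall>y\<in>A. y \<le> x \<longrightarrow> norm y < \<epsilon>"
      using mp[OF spec[OF oc[unfolded order_continuous_def], of A] cond] .
    then obtain a where aA: "a \<in> A" and ay: "\<forall>y\<in>A. y \<le> a \<longrightarrow> norm y < r"
      using \<open>0 < r\<close> by blast
    have na: "norm a < r" using ay aA by blast
    from aA obtain N where N: "\<forall>n\<ge>N. u n \<le> a" unfolding A_def by blast
    have "\<forall>n\<ge>N. norm (norm (u n) - 0) < r"
    proof (intro allI impI)
      fix n assume "N \<le> n"
      then have "norm (u n) \<le> norm a" using N norm_pos_mono[OF pos] by blast
      then show "norm (norm (u n) - 0) < r" using na by simp
    qed
    then show "\<exists>no. \<forall>n\<ge>no. norm (norm (u n) - 0) < r" by blast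
  qed
qed

lemma oc_disj_seq:
  fixes f :: "nat \<Rightarrow> 'a::banach_lattice"
  assumes oc: "order_continuous TYPE('a)" and d: "disjoint_seq f" and h: "0 \<le> h"
  shows "(\<lambda>n. norm (inf (lmod (f n)) h)) \<longlonglongrightarrow> 0"
proof (rule oc_disj_null[OF oc])
  show "0 \<le> inf (lmod (f n)) h" for n using h lmod_nonneg by simp
  show "inf (lmod (f n)) h \<le> h" for n by simp
  fix n m :: nat assume "n \<noteq> m"
  then have "inf (lmod (f n)) (lmod (f m)) = 0" using d unfolding disjoint_seq_def disjoint_elems_def by auto
  moreover have "inf (inf (lmod (f n)) h) (inf (lmod (f m)) h) \<le> inf (lmod (f n)) (lmod (f m))"
    by (meson inf_mono inf.cobounded1)
  moreover have "0 \<le> inf (inf (lmod (f n)) h) (inf (lmod (f m)) h)" using h lmod_nonneg[of "f n"] lmod_nonneg[of "f m"] by simp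
  ultimately show "inf (inf (lmod (f n)) h) (inf (lmod (f m)) h) = 0" by simp
qed


lemma disj_scale: assumes "0 < r" "0 < s" "0 \<le> a" "0 \<le> b" "inf a b = (0::'a::banach_lattice)"
  shows "inf (r *\<^sub>R a) (s *\<^sub>R b) = 0"
proof -
  have "inf (r *\<^sub>R a) (s *\<^sub>R b) \<le> inf ((r+s) *\<^sub>R a) ((r+s) *\<^sub>R b)"
  proof (rule inf_mono)
    show "r *\<^sub>R a \<le> (r+s) *\<^sub>R a" using assms by (intro scaleR_right_mono) simp_all
    show "s *\<^sub>R b \<le> (r+s) *\<^sub>R b" using assms by (intro scaleR_right_mono) simp_all
  qed
  also have "\<dots> = (r+s) *\<^sub>R inf a b" using assms scaleR_inf[of "r+s" a b] by simp
  finally have "inf (r *\<^sub>R a) (s *\<^sub>R b) \<le> 0" using assms by simp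
  moreover have "0 \<le> inf (r *\<^sub>R a) (s *\<^sub>R b)" using assms by (simp add: scaleR_nonneg_nonneg)
  ultimately show ?thesis by simp
qed

lemma sup_minus_mono: "d \<le> c \<Longrightarrow> sup (x - c) 0 \<le> sup (x - d) (0::'a::lattice_ab_group_add)"
  by (rule sup.mono) (simp_all add: diff_left_mono)

lemma not_iv_not_DNS:
  fixes T :: "'a::banach_lattice \<Rightarrow> 'b::real_normed_vector"
  assumes bl: "bounded_linear T"
    and Hyp: "\<And>\<epsilon> \<delta> h. 0 < \<epsilon> \<Longrightarrow> 0 < \<delta> \<Longrightarrow> 0 \<le> h \<Longrightarrow>
         (\<exists>f. norm f = 1 \<and> norm (inf (lmod f) h) < \<epsilon> \<and> norm (T f) < \<delta>)"
  shows "\<not> DNS T"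
proof -
  define ch where "ch h n = (SOME f. norm f = 1 \<and> norm (inf (lmod f) h) < (1/4::real)^n \<and> norm (T f) < (1/4)^n)"
    for h and n :: nat
  have ch: "norm (ch h n) = 1 \<and> norm (inf (lmod (ch h n)) h) < (1/4)^n \<and> norm (T (ch h n)) < (1/4)^n"
    if "0 \<le> h" for h n
    unfolding ch_def by (rule someI_ex) (rule Hyp, auto simp: that)
  define H where "H = rec_nat 0 (\<lambda>n Hn. Hn + lmod (ch Hn n))"
  have H0: "H 0 = 0" and HS: "H (Suc n) = H n + lmod (ch (H n) n)" for n unfolding H_def by simp_all
  define f where "f n = ch (H n) n" for n
  have Hpos: "0 \<le> H n" for n
    by (induction n) (auto simp: H0 HS intro: add_nonneg_nonneg lmod_nonneg)
  have Hge: "k < n \<Longrightarrow> lmod (f k) \<le> H n" for k n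
  proof (induction n)
    case 0 then show ?case by simp
  next
    case (Suc n)
    show ?case
    proof (cases "k < n")
      case True then show ?thesis using Suc lmod_nonneg[of "ch (H n) n"] by (simp add: HS add_increasing2)
    next
      case False then have "k = n" using Suc by simp
      then show ?thesis using Hpos[of n] by (simp add: HS f_def add_increasing)
    qed
  qed
  have fp: "norm (f n) = 1" "norm (inf (lmod (f n)) (H n)) < (1/4)^n" "norm (T (f n)) < (1/4)^n" for n
    using ch[OF Hpos[of n], of n] unfolding f_def by auto
  have pair: "norm (inf (lmod (f n)) (lmod (f m))) \<le> (1/4)^m" if "n < m" for n m
  proof -
    have "inf (lmod (f n)) (lmod (f m)) \<le> inf (lmod (f m)) (H m)"
      using Hge[OF that] by (simp add: inf.coboundedI1 le_infI2 inf_commute)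
    then have "norm (inf (lmod (f n)) (lmod (f m))) \<le> norm (inf (lmod (f m)) (H m))"
      by (intro norm_pos_mono) (simp_all add: lmod_nonneg)
    then show ?thesis using fp(2)[of m] by simp
  qed
  define t where "t n j = (if n < j then inf (lmod (f n)) (lmod (f j)) else 0)" for n j
  have tpos: "0 \<le> t n j" for n j unfolding t_def by (simp add: lmod_nonneg)
  have tnorm: "norm (t n j) \<le> (1/2)^n * (1/2)^j" for n j
  proof (cases "n < j")
    case True
    have "(1/4::real)^j = (1/2)^j * (1/2)^j" by (simp add: power_mult_distrib[symmetric])
    also have "\<dots> \<le> (1/2)^n * (1/2)^j" using True
      by (intro mult_right_mono power_decreasing) auto
    finally show ?thesis using pair[OF True] True unfolding t_def by simp
  qed (simp add: t_def)
  have gsum: "summable (\<lambda>j. (1/2::real)^n * (1/2)^j)" for n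
    by (intro summable_mult summable_geometric) simp
  have tsum: "summable (t n)" for n
    by (rule summable_comparison_test'[OF gsum]) (rule tnorm)
  define S where "S n = suminf (t n)" for n
  have Snorm: "norm (S n) \<le> 2 * (1/2)^n" for n
  proof -
    have "norm (S n) \<le> (\<Sum>j. (1/2::real)^n * (1/2)^j)" unfolding S_def
      by (rule norm_suminf_le[OF tnorm gsum])
    also have "\<dots> = (1/2)^n * 2" by (subst suminf_mult) (simp_all add: suminf_geometric)
    finally show ?thesis by simp
  qed
  have Sge: "t n m \<le> S n" for n m
  proof -
    have lim: "(\<lambda>N. \<Sum>j<N. t n j) \<longlonglongrightarrow> S n" unfolding S_def by (rule summable_LIMSEQ[OF tsum])
    have ev: "eventually (\<lambda>N. (\<Sum>j<N. t n j) \<in> {x. t n m \<le> x}) sequentially"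
    proof (rule eventually_sequentiallyI[of "Suc m"])
      fix N assume "Suc m \<le> N"
      then have "m \<in> {..<N}" by simp
      then have "(\<Sum>j<N. t n j) = t n m + (\<Sum>j\<in>{..<N} - {m}. t n j)" by (simp add: sum.remove)
      moreover have "0 \<le> (\<Sum>j\<in>{..<N} - {m}. t n j)" by (rule sum_nonneg) (rule tpos)
      ultimately show "(\<Sum>j<N. t n j) \<in> {x. t n m \<le> x}" by simp
    qed
    show ?thesis using Lim_in_closed_set[OF closed_ge ev _ lim] by simp
  qed
  have Spos: "0 \<le> S n" for n using tpos[of n n] Sge[of n n] by simp
  define c where "c n = H n + S n" for n
  have cpos: "0 \<le> c n" for n unfolding c_def using Hpos Spos by (simp add: add_nonneg_nonneg)
  define g where "g n = f n - clip (f n) (c n)" for n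
  have gdiff: "norm (f n - g n) \<le> 3 * (1/2)^n" for n
  proof -
    have "norm (f n - g n) \<le> norm (inf (lmod (f n)) (c n))" unfolding g_def
      using clip_bound[OF cpos] by (simp add: norm_lmod_le)
    also have "\<dots> \<le> norm (inf (lmod (f n)) (H n) + S n)"
    proof (rule norm_pos_mono)
      show "0 \<le> inf (lmod (f n)) (c n)" using cpos lmod_nonneg by simp
      have "inf (lmod (f n)) (c n) \<le> inf (lmod (f n) + S n) (H n + S n)"
        unfolding c_def using Spos by (intro inf_mono) (auto simp: add_increasing2)
      then show "inf (lmod (f n)) (c n) \<le> inf (lmod (f n)) (H n) + S n"
        by (simp add: add_inf_distrib_right)
    qed
    also have "\<dots> \<le> norm (inf (lmod (f n)) (H n)) + norm (S n)" by (rule norm_triangle_ineq)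
    also have "\<dots> \<le> (1/4)^n + 2 * (1/2)^n" using fp(2)[of n] Snorm[of n] by simp
    also have "(1/4::real)^n \<le> (1/2)^n" by (intro power_mono) auto
    then have "(1/4::real)^n + 2 * (1/2)^n \<le> 3 * (1/2)^n" by simp
    finally show ?thesis .
  qed
  have gbound: "lmod (g n) \<le> sup (lmod (f n) - c n) 0" for n
    unfolding g_def by (rule clip_rest[OF cpos])
  have gdisj_lt: "inf (lmod (g n)) (lmod (g m)) = 0" if "n < m" for n m
  proof (rule disj_core[OF lmod_nonneg lmod_nonneg])
    have "inf (lmod (f n)) (lmod (f m)) \<le> c n" using Sge[of n m] Hpos[of n] that
      unfolding c_def t_def by (simp add: add_increasing)
    then show "lmod (g n) \<le> sup (lmod (f n) - inf (lmod (f n)) (lmod (f m))) 0"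
      using gbound order.trans sup_minus_mono by blast
    have "lmod (f n) \<le> c m" using Hge[OF that] Spos[of m] unfolding c_def by (simp add: add_increasing2)
    then show "lmod (g m) \<le> sup (lmod (f m) - lmod (f n)) 0"
      using gbound order.trans sup_minus_mono by blast
  qed
  have gdisj: "inf (lmod (g n)) (lmod (g m)) = 0" if "n \<noteq> m" for n m
    using that gdisj_lt[of n m] gdisj_lt[of m n] by (cases "n < m") (auto simp: inf_commute)
  have gnorm: "norm (g n) \<ge> 1/2" if "3 \<le> n" for n
  proof -
    have "(1/2::real)^n \<le> (1/2)^3" using that by (intro power_decreasing) auto
    also have "(1/2::real)^3 = 1/8" by (simp add: eval_nat_numeral)
    finally have "(1/2::real)^n \<le> 1/8" .
    then have "norm (f n - g n) \<le> 3/8" using gdiff[of n] by linarith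
    moreover have "norm (f n) \<le> norm (f n - g n) + norm (g n)" using norm_triangle_ineq[of "f n - g n" "g n"] by simp
    ultimately show ?thesis using fp(1)[of n] by simp
  qed
  obtain K where K: "K > 0" "\<And>x. norm (T x) \<le> norm x * K"
    using bounded_linear.pos_bounded[OF bl] by blast
  define e where "e k = (1 / norm (g (k+3))) *\<^sub>R g (k+3)" for k
  have gpos: "norm (g (k+3)) > 0" for k using gnorm[of "k+3"] by linarith
  have e1: "norm (e k) = 1" for k unfolding e_def using gpos[of k] by simp
  have edisj: "disjoint_seq e" unfolding disjoint_seq_def disjoint_elems_def
  proof (intro allI impI)
    fix n m :: nat assume "n \<noteq> m"
    then have h0: "inf (lmod (g (n+3))) (lmod (g (m+3))) = 0" by (intro gdisj) simp
    have en: "lmod (e n) = (1 / norm (g (n+3))) *\<^sub>R lmod (g (n+3))"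
      unfolding e_def using gpos[of n] by (intro lmod_scaleR) simp
    have em: "lmod (e m) = (1 / norm (g (m+3))) *\<^sub>R lmod (g (m+3))"
      unfolding e_def using gpos[of m] by (intro lmod_scaleR) simp
    show "inf (lmod (e n)) (lmod (e m)) = 0"
      unfolding en em using gpos[of n] gpos[of m] h0 by (intro disj_scale) (simp_all add: lmod_nonneg)
  qed
  have Te: "norm (T (e k)) \<le> (2 * (1 + 3 * K)) * (1/2)^k" for k
  proof -
    let ?n = "k+3"
    have lin: "T (g ?n) = T (f ?n) - T (f ?n - g ?n)" using bl by (simp add: linear_simps)
    have "norm (T (g ?n)) \<le> norm (T (f ?n)) + norm (T (f ?n - g ?n))"
      unfolding lin by (rule norm_triangle_ineq4)
    also have "\<dots> \<le> (1/4)^?n + 3 * ((1/2)^?n * K)"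
    proof -
      have "norm (f ?n - g ?n) * K \<le> (3 * (1/2)^?n) * K"
        using gdiff[of ?n] K(1) by (intro mult_right_mono) auto
      then show ?thesis using fp(3)[of ?n] K(2)[of "f ?n - g ?n"] by (simp add: algebra_simps)
    qed
    also have "\<dots> \<le> (1 + 3 * K) * (1/2)^k"
    proof -
      have "(1/4::real)^?n \<le> (1/2)^k" by (rule order.trans[of _ "(1/2)^?n"]) (auto intro!: power_mono power_decreasing)
      moreover have "(1/2::real)^?n \<le> (1/2)^k" by (intro power_decreasing) auto
      then have "(1/2::real)^?n * K \<le> (1/2)^k * K" using K(1) by (intro mult_right_mono) auto
      moreover have "(1 + 3 * K) * (1/2::real)^k = (1/2)^k + 3 * ((1/2)^k * K)" by (simp add: algebra_simps)
      ultimately show ?thesis by linarith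
    qed
    finally have a: "norm (T (g ?n)) \<le> (1 + 3 * K) * (1/2)^k" .
    have "norm (T (e k)) = norm (T (g ?n)) / norm (g ?n)" unfolding e_def
      using bl gpos[of k] by (simp add: linear_simps)
    also have "\<dots> \<le> norm (T (g ?n)) / (1/2)"
      by (rule divide_left_mono) (use gnorm[of ?n] in auto)
    also have "\<dots> = 2 * norm (T (g ?n))" by simp
    also have "\<dots> \<le> 2 * ((1 + 3 * K) * (1/2)^k)" using a by simp
    also have "\<dots> = (2 * (1 + 3 * K)) * (1/2)^k" by (simp only: mult.assoc)
    finally show ?thesis .
  qed
  have "(\<lambda>k. norm (T (e k))) \<longlonglongrightarrow> 0"
  proof (rule Lim_null_comparison)
    show "\<forall>\<^sub>F k in sequentially. norm (norm (T (e k))) \<le> (2 * (1 + 3 * K)) * (1/2)^k" using Te by simp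
    show "(\<lambda>k. (2 * (1 + 3 * K)) * (1/2::real)^k) \<longlonglongrightarrow> 0"
      by (intro tendsto_mult_right_zero LIMSEQ_power_zero) auto
  qed
  then show ?thesis unfolding DNS_def using e1 edisj by blast
qed


definition IVc :: "('a::banach_lattice \<Rightarrow> 'b::real_normed_vector) \<Rightarrow> bool" where
  "IVc T \<longleftrightarrow> (\<exists>\<epsilon>>0. \<exists>\<delta>>0. \<exists>h::'a. 0 \<le> h \<and>
            (\<forall>f. norm f = 1 \<and> norm (inf (lmod f) h) < \<epsilon> \<longrightarrow> norm (T f) \<ge> \<delta>))"

lemma M1: fixes T :: "'a::banach_lattice \<Rightarrow> 'b::real_normed_vector"
  assumes "bounded_linear T" "DNS T" shows "IVc T"
proof (rule ccontr)
  assume n: "\<not> IVc T"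
  have "\<not> DNS T"
  proof (rule not_iv_not_DNS[OF assms(1)])
    fix \<epsilon> \<delta> :: real and h :: 'a assume "0 < \<epsilon>" "0 < \<delta>" "0 \<le> h"
    then have "\<not> (\<forall>f. norm f = 1 \<and> norm (inf (lmod f) h) < \<epsilon> \<longrightarrow> norm (T f) \<ge> \<delta>)"
      using n unfolding IVc_def by blast
    then show "\<exists>f. norm f = 1 \<and> norm (inf (lmod f) h) < \<epsilon> \<and> norm (T f) < \<delta>"
      by (auto simp: not_le)
  qed
  then show False using assms(2) by simp
qed

lemma M2: assumes oc: "order_continuous TYPE('a::banach_lattice)" and iv: "IVc (T::'a \<Rightarrow> 'b::real_normed_vector)"
  shows "strictly_DNS T"
proof -
  obtain \<epsilon> \<delta> h where e: "\<epsilon> > 0" and d: "\<delta> > 0" and h: "0 \<le> h"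
    and P: "\<And>f. norm f = 1 \<Longrightarrow> norm (inf (lmod f) h) < \<epsilon> \<Longrightarrow> norm (T f) \<ge> \<delta>"
    using iv unfolding IVc_def by blast
  have "\<not> (\<exists>f :: nat \<Rightarrow> 'a. (\<forall>n. norm (f n) = 1) \<and> disjoint_seq f \<and> (\<forall>n. norm (T (f n)) \<le> \<delta>/2))"
  proof
    assume "\<exists>f :: nat \<Rightarrow> 'a. (\<forall>n. norm (f n) = 1) \<and> disjoint_seq f \<and> (\<forall>n. norm (T (f n)) \<le> \<delta>/2)"
    then obtain f :: "nat \<Rightarrow> 'a" where f1: "\<And>n. norm (f n) = 1" and fd: "disjoint_seq f"
      and fT: "\<And>n. norm (T (f n)) \<le> \<delta>/2" by blast
    have "(\<lambda>n. norm (inf (lmod (f n)) h)) \<longlonglongrightarrow> 0" by (rule oc_disj_seq[OF oc fd h])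
    from order_tendstoD(2)[OF this e] obtain n where "norm (inf (lmod (f n)) h) < \<epsilon>"
      by (auto dest: eventually_happens)
    then have "norm (T (f n)) \<ge> \<delta>" using P f1 by blast
    then show False using fT[of n] d by simp
  qed
  then show ?thesis unfolding strictly_DNS_def using d by (intro exI[of _ "\<delta>/2"]) simp
qed

lemma M3: fixes T :: "'a::banach_lattice \<Rightarrow> 'b::real_normed_vector"
  assumes "strictly_DNS T" shows "DNS T"
proof -
  have "\<exists>\<delta>>0. \<not> (\<exists>f :: nat \<Rightarrow> 'a. (\<forall>n. norm (f n) = 1) \<and> disjoint_seq f \<and> (\<forall>n. norm (T (f n)) \<le> \<delta>))"
    using assms unfolding strictly_DNS_def .
  then obtain \<delta> where d: "\<delta> > 0" and nf: "\<not> (\<exists>f :: nat \<Rightarrow> 'a. (\<forall>n. norm (f n) = 1) \<and> disjoint_seq f \<and> (\<forall>n. norm (T (f n)) \<le> \<delta>))"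
    by (elim exE conjE)
  show ?thesis unfolding DNS_def
  proof
    assume "\<exists>f. (\<forall>n. norm (f n) = 1) \<and> disjoint_seq f \<and> (\<lambda>n. norm (T (f n))) \<longlonglongrightarrow> 0"
    then obtain f :: "nat \<Rightarrow> 'a" where fall: "(\<forall>n. norm (f n) = 1) \<and> disjoint_seq f \<and> (\<lambda>n. norm (T (f n))) \<longlonglongrightarrow> 0"
      by (elim exE)
    then have f1: "\<And>n. norm (f n) = 1" and fd: "disjoint_seq f"
      and ft: "(\<lambda>n. norm (T (f n))) \<longlonglongrightarrow> 0" by simp_all
    have "\<exists>N. \<forall>n\<ge>N. norm (T (f n)) < \<delta>"
      using order_tendstoD(2)[OF ft d] unfolding eventually_sequentially .
    then obtain N where N': "\<forall>n\<ge>N. norm (T (f n)) < \<delta>" by (elim exE)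
    have N: "\<And>n. n \<ge> N \<Longrightarrow> norm (T (f n)) < \<delta>" using N' by simp
    have A: "\<forall>n. norm (f (n+N)) = 1" using f1 by blast
    have B: "disjoint_seq (\<lambda>n. f (n+N))" unfolding disjoint_seq_def
    proof (intro allI impI)
      fix n m :: nat assume "n \<noteq> m"
      then have "n + N \<noteq> m + N" by simp
      then show "disjoint_elems (f (n+N)) (f (m+N))" using fd unfolding disjoint_seq_def by blast
    qed
    have C: "\<forall>n. norm (T (f (n+N))) \<le> \<delta>"
    proof
      fix n have "norm (T (f (n+N))) < \<delta>" by (rule N) simp
      then show "norm (T (f (n+N))) \<le> \<delta>" by simp
    qed
    from A B C have "(\<forall>n. norm (f (n+N)) = 1) \<and> disjoint_seq (\<lambda>n. f (n+N)) \<and> (\<forall>n. norm (T (f (n+N))) \<le> \<delta>)"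
      by blast
    then have "\<exists>f :: nat \<Rightarrow> 'a. (\<forall>n. norm (f n) = 1) \<and> disjoint_seq f \<and> (\<forall>n. norm (T (f n)) \<le> \<delta>)"
      by (rule exI[where x="\<lambda>n. f (n+N)"])
    with nf show False by contradiction
  qed
qed

lemma M4: fixes T :: "'a::banach_lattice \<Rightarrow> 'b::real_normed_vector" and x :: "'i \<Rightarrow> 'a"
  assumes iv: "IVc T" and G: "G \<noteq> bot"
  shows "\<not> ((\<forall>i. norm (x i) = 1) \<and> un_null x G \<and> ((\<lambda>i. norm (T (x i))) \<longlongrightarrow> 0) G)"
proof
  assume a: "(\<forall>i. norm (x i) = 1) \<and> un_null x G \<and> ((\<lambda>i. norm (T (x i))) \<longlongrightarrow> 0) G"
  obtain \<epsilon> \<delta> h where e: "\<epsilon> > 0" and d: "\<delta> > 0" and h: "0 \<le> h"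
    and P: "\<And>f. norm f = 1 \<Longrightarrow> norm (inf (lmod f) h) < \<epsilon> \<Longrightarrow> norm (T f) \<ge> \<delta>"
    using iv unfolding IVc_def by blast
  have e1: "eventually (\<lambda>i. norm (inf (lmod (x i)) h) < \<epsilon>) G" using a h e unfolding un_null_def by blast
  have e2: "eventually (\<lambda>i. norm (T (x i)) < \<delta>) G" using order_tendstoD(2)[OF _ d] a by blast
  have x1: "\<And>i. norm (x i) = 1" using a by blast
  have "eventually (\<lambda>i. False) G"
    using eventually_conj[OF e1 e2]
  proof (rule eventually_mono)
    fix i assume "norm (inf (lmod (x i)) h) < \<epsilon> \<and> norm (T (x i)) < \<delta>"
    then have A: "norm (inf (lmod (x i)) h) < \<epsilon>" and B: "norm (T (x i)) < \<delta>" by auto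
    have "\<delta> \<le> norm (T (x i))" by (rule P[OF x1 A])
    with B show False by simp
  qed
  then show False using G by (simp add: eventually_False)
qed

lemma M5: assumes oc: "order_continuous TYPE('a::banach_lattice)"
  and n: "\<not> (\<exists>x :: nat \<Rightarrow> 'a. (\<forall>n. norm (x n) = 1) \<and> un_null x sequentially
              \<and> (\<lambda>n. norm ((T::'a \<Rightarrow> 'b::real_normed_vector) (x n))) \<longlonglongrightarrow> 0)"
  shows "DNS T"
  unfolding DNS_def
proof
  assume "\<exists>f. (\<forall>n. norm (f n) = 1) \<and> disjoint_seq f \<and> (\<lambda>n. norm (T (f n))) \<longlonglongrightarrow> 0"
  then obtain f :: "nat \<Rightarrow> 'a" where f1: "\<And>n. norm (f n) = 1" and fd: "disjoint_seq f"
    and ft: "(\<lambda>n. norm (T (f n))) \<longlonglongrightarrow> 0" by blast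
  have "un_null f sequentially" unfolding un_null_def
  proof (intro allI impI)
    fix h :: 'a and \<epsilon> :: real assume "0 \<le> h" "0 < \<epsilon>"
    then show "\<forall>\<^sub>F i in sequentially. norm (inf (lmod (f i)) h) < \<epsilon>"
      using order_tendstoD(2)[OF oc_disj_seq[OF oc fd]] by blast
  qed
  then show False using n f1 ft by blast
qed

theorem theorem5p7:
  fixes T :: "'f::banach_lattice \<Rightarrow>\<^sub>L 'e::banach"
  assumes "order_continuous TYPE('f)"
  shows "(DNS (blinfun_apply T) \<longleftrightarrow> strictly_DNS (blinfun_apply T))
    \<and> (DNS (blinfun_apply T) \<longleftrightarrow>
         \<not> (\<exists>x :: nat \<Rightarrow> 'f. (\<forall>n. norm (x n) = 1) \<and> un_null x sequentially
              \<and> (\<lambda>n. norm (blinfun_apply T (x n))) \<longlonglongrightarrow> 0))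
    \<and> (DNS (blinfun_apply T) \<longrightarrow>
         (\<forall>(G :: 'i filter) (x :: 'i \<Rightarrow> 'f). G \<noteq> bot \<longrightarrow>
            \<not> ((\<forall>i. norm (x i) = 1) \<and> un_null x G
                 \<and> ((\<lambda>i. norm (blinfun_apply T (x i))) \<longlongrightarrow> 0) G)))
    \<and> (DNS (blinfun_apply T) \<longleftrightarrow>
         (\<exists>\<epsilon>>0. \<exists>\<delta>>0. \<exists>h::'f. 0 \<le> h \<and>
            (\<forall>f. norm f = 1 \<and> norm (inf (lmod f) h) < \<epsilon> \<longrightarrow> norm (blinfun_apply T f) \<ge> \<delta>)))
    \<and> open {S :: 'f \<Rightarrow>\<^sub>L 'e. DNS (blinfun_apply S)}"
proof -
  note oc = assms
  have bl: "bounded_linear (blinfun_apply S)" for S :: "'f \<Rightarrow>\<^sub>L 'e"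
    by (rule blinfun.bounded_linear_right)
  have iv_iff: "DNS (blinfun_apply S) \<longleftrightarrow> IVc (blinfun_apply S)" for S :: "'f \<Rightarrow>\<^sub>L 'e"
  proof
    show "DNS (blinfun_apply S) \<Longrightarrow> IVc (blinfun_apply S)" by (rule M1[OF bl])
    show "IVc (blinfun_apply S) \<Longrightarrow> DNS (blinfun_apply S)" by (intro M3 M2[OF oc])
  qed
  have c1: "DNS (blinfun_apply T) \<longleftrightarrow> strictly_DNS (blinfun_apply T)"
  proof
    show "DNS (blinfun_apply T) \<Longrightarrow> strictly_DNS (blinfun_apply T)" by (intro M2[OF oc] M1[OF bl])
    show "strictly_DNS (blinfun_apply T) \<Longrightarrow> DNS (blinfun_apply T)" by (rule M3)
  qed
  have c3: "DNS (blinfun_apply T) \<longrightarrow>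
         (\<forall>(G :: 'i filter) (x :: 'i \<Rightarrow> 'f). G \<noteq> bot \<longrightarrow>
            \<not> ((\<forall>i. norm (x i) = 1) \<and> un_null x G
                 \<and> ((\<lambda>i. norm (blinfun_apply T (x i))) \<longlongrightarrow> 0) G))"
  proof (intro impI allI)
    fix G :: "'i filter" and x :: "'i \<Rightarrow> 'f"
    assume "DNS (blinfun_apply T)" "G \<noteq> bot"
    then show "\<not> ((\<forall>i. norm (x i) = 1) \<and> un_null x G
                 \<and> ((\<lambda>i. norm (blinfun_apply T (x i))) \<longlongrightarrow> 0) G)"
      by (intro M4 M1[OF bl])
  qed
  have c2: "DNS (blinfun_apply T) \<longleftrightarrow>
         \<not> (\<exists>x :: nat \<Rightarrow> 'f. (\<forall>n. norm (x n) = 1) \<and> un_null x sequentially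
              \<and> (\<lambda>n. norm (blinfun_apply T (x n))) \<longlonglongrightarrow> 0)"
  proof
    assume "DNS (blinfun_apply T)"
    then have "IVc (blinfun_apply T)" by (rule M1[OF bl])
    then show "\<not> (\<exists>x :: nat \<Rightarrow> 'f. (\<forall>n. norm (x n) = 1) \<and> un_null x sequentially
              \<and> (\<lambda>n. norm (blinfun_apply T (x n))) \<longlonglongrightarrow> 0)"
      using M4[of "blinfun_apply T" sequentially] by auto
  next
    assume "\<not> (\<exists>x :: nat \<Rightarrow> 'f. (\<forall>n. norm (x n) = 1) \<and> un_null x sequentially
              \<and> (\<lambda>n. norm (blinfun_apply T (x n))) \<longlonglongrightarrow> 0)"
    then show "DNS (blinfun_apply T)" by (rule M5[OF oc])
  qed
  have c4: "DNS (blinfun_apply T) \<longleftrightarrow>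
         (\<exists>\<epsilon>>0. \<exists>\<delta>>0. \<exists>h::'f. 0 \<le> h \<and>
            (\<forall>f. norm f = 1 \<and> norm (inf (lmod f) h) < \<epsilon> \<longrightarrow> norm (blinfun_apply T f) \<ge> \<delta>))"
    using iv_iff[of T] unfolding IVc_def .
  have c5: "open {S :: 'f \<Rightarrow>\<^sub>L 'e. DNS (blinfun_apply S)}"
    unfolding open_dist
  proof (intro ballI)
    fix S assume "S \<in> {S :: 'f \<Rightarrow>\<^sub>L 'e. DNS (blinfun_apply S)}"
    then have "IVc (blinfun_apply S)" using iv_iff by blast
    then obtain \<epsilon> \<delta> h where e: "\<epsilon> > 0" and d: "\<delta> > 0" and h: "0 \<le> h"
      and P: "\<And>f. norm f = 1 \<Longrightarrow> norm (inf (lmod f) h) < \<epsilon> \<Longrightarrow> norm (blinfun_apply S f) \<ge> \<delta>"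
      unfolding IVc_def by blast
    show "\<exists>e>0. \<forall>y. dist y S < e \<longrightarrow> y \<in> {S :: 'f \<Rightarrow>\<^sub>L 'e. DNS (blinfun_apply S)}"
    proof (intro exI conjI allI impI)
      show "\<delta>/2 > 0" using d by simp
      fix R :: "'f \<Rightarrow>\<^sub>L 'e" assume "dist R S < \<delta>/2"
      then have RS: "norm (R - S) < \<delta>/2" by (simp add: dist_norm)
      have "IVc (blinfun_apply R)" unfolding IVc_def
      proof (intro exI conjI allI impI)
        show "\<epsilon> > 0" "\<delta>/2 > 0" "0 \<le> h" using e d h by simp_all
        fix f :: 'f assume f: "norm f = 1 \<and> norm (inf (lmod f) h) < \<epsilon>"
        then have "norm (blinfun_apply S f) \<ge> \<delta>" using P by blast
        moreover have "norm (blinfun_apply (R - S) f) \<le> norm (R - S) * norm f" by (rule norm_blinfun)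
        moreover have "blinfun_apply (R - S) f = blinfun_apply R f - blinfun_apply S f"
          by (simp add: blinfun.diff_left)
        moreover have "norm (blinfun_apply S f) \<le> norm (blinfun_apply R f) + norm (blinfun_apply R f - blinfun_apply S f)"
          by (metis norm_minus_commute norm_triangle_sub)
        ultimately show "norm (blinfun_apply R f) \<ge> \<delta>/2" using f RS by simp
      qed
      then show "R \<in> {S :: 'f \<Rightarrow>\<^sub>L 'e. DNS (blinfun_apply S)}" using iv_iff by blast
    qed
  qed
  show ?thesis using c1 c2 c3 c4 c5 by (intro conjI)
qed

end
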